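(* Let $t$ be a normal $\lambda$-term and $v$ a closed $\lambda$-term, let $\alpha$ be a variable, $x_1,\dots,x_r$ variables, and for each $i$ let $y_{i1},\dots,y_{in_i}$ be variables distinct from $\alpha$. If $t[\lambda y_{11}\dots\lambda y_{1n_1}\alpha/x_1,\dots,\lambda y_{r1}\dots\lambda y_{rn_r}\alpha/x_r]\rightarrow_\beta v$ (simultaneous substitution), then $x_i\notin Fv(t)$ for all $1\le i\le r$.
   Context: $\lambda$-terms are those of the untyped $\lambda$-calculus; $Fv(t)$ is the set of free variables of $t$; a term is closed if it has no free variable; substitution is capture-avoiding; $\rightarrow_\beta$ denotes $\beta$-reduction in zero or more steps; a term is normal if it contains no $\beta$-redex. *)

theory Defs
  imports Main
begin

text \<open>Untyped lambda-terms in the locally nameless representation: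
  free variables are names (natural numbers), bound variables are de Bruijn
  indices. The lambda-terms are exactly the locally closed raw terms (lc).
  Alpha-equivalent terms are identical, and substitution of free variables
  is automatically capture-avoiding.\<close>

type_synonym var = nat

datatype trm = FVar var | BVar nat | App trm trm | Abs trm

fun fv :: "trm \<Rightarrow> var set" where
  "fv (FVar x) = {x}"
| "fv (BVar i) = {}"
| "fv (App s t) = fv s \<union> fv t"
| "fv (Abs t) = fv t"

fun opn :: "nat \<Rightarrow> trm \<Rightarrow> trm \<Rightarrow> trm" where
  "opn k u (FVar x) = FVar x"
| "opn k u (BVar i) = (if i = k then u else BVar i)"
| "opn k u (App s t) = App (opn k u s) (opn k u t)"
| "opn k u (Abs t) = Abs (opn (Suc k) u t)"

fun cls :: "nat \<Rightarrow> var \<Rightarrow> trm \<Rightarrow> trm" where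
  "cls k x (FVar y) = (if y = x then BVar k else FVar y)"
| "cls k x (BVar i) = BVar i"
| "cls k x (App s t) = App (cls k x s) (cls k x t)"
| "cls k x (Abs t) = Abs (cls (Suc k) x t)"

inductive lc :: "trm \<Rightarrow> bool" where
  lc_var: "lc (FVar x)"
| lc_app: "lc s \<Longrightarrow> lc t \<Longrightarrow> lc (App s t)"
| lc_abs: "finite L \<Longrightarrow> (\<And>x. x \<notin> L \<Longrightarrow> lc (opn 0 (FVar x) t)) \<Longrightarrow> lc (Abs t)"

definition lam :: "var \<Rightarrow> trm \<Rightarrow> trm" where
  "lam x t = Abs (cls 0 x t)"

definition lams :: "var list \<Rightarrow> var \<Rightarrow> trm" where
  "lams ys a = foldr lam ys (FVar a)"

fun msubst :: "(var \<Rightarrow> trm option) \<Rightarrow> trm \<Rightarrow> trm" where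
  "msubst \<sigma> (FVar x) = (case \<sigma> x of Some u \<Rightarrow> u | None \<Rightarrow> FVar x)"
| "msubst \<sigma> (BVar i) = BVar i"
| "msubst \<sigma> (App s t) = App (msubst \<sigma> s) (msubst \<sigma> t)"
| "msubst \<sigma> (Abs t) = Abs (msubst \<sigma> t)"

inductive beta1 :: "trm \<Rightarrow> trm \<Rightarrow> bool" where
  beta_redex: "lc (Abs s) \<Longrightarrow> lc u \<Longrightarrow> beta1 (App (Abs s) u) (opn 0 u s)"
| beta_app1: "beta1 s s' \<Longrightarrow> lc u \<Longrightarrow> beta1 (App s u) (App s' u)"
| beta_app2: "lc s \<Longrightarrow> beta1 u u' \<Longrightarrow> beta1 (App s u) (App s u')"
| beta_abs: "finite L \<Longrightarrow> (\<And>x. x \<notin> L \<Longrightarrow> beta1 (opn 0 (FVar x) s) (opn 0 (FVar x) s'))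
             \<Longrightarrow> beta1 (Abs s) (Abs s')"

abbreviation beta :: "trm \<Rightarrow> trm \<Rightarrow> bool" where
  "beta \<equiv> beta1\<^sup>*\<^sup>*"

fun has_redex :: "trm \<Rightarrow> bool" where
  "has_redex (FVar x) = False"
| "has_redex (BVar i) = False"
| "has_redex (App s t) = ((\<exists>u. s = Abs u) \<or> has_redex s \<or> has_redex t)"
| "has_redex (Abs t) = has_redex t"

definition normal :: "trm \<Rightarrow> bool" where
  "normal t \<longleftrightarrow> \<not> has_redex t"

definition closed :: "trm \<Rightarrow> bool" where
  "closed t \<longleftrightarrow> fv t = {}"

end

theory Submission
  imports Defs
begin

fun isAbs :: "trm \<Rightarrow> bool" where
  "isAbs (Abs _) = True" | "isAbs _ = False"

inductive A :: "var \<Rightarrow> trm \<Rightarrow> bool" for \<alpha> where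
  A1: "A \<alpha> (FVar \<alpha>)" | A2: "A \<alpha> s \<Longrightarrow> A \<alpha> (Abs s)"

inductive C :: "var \<Rightarrow> trm \<Rightarrow> bool" for \<alpha> where
  C1: "C \<alpha> (FVar a)" | C2: "C \<alpha> (BVar i)" | C3: "C \<alpha> s \<Longrightarrow> C \<alpha> (Abs s)"
| C4: "C \<alpha> s \<Longrightarrow> C \<alpha> u \<Longrightarrow> \<not> isAbs s \<Longrightarrow> C \<alpha> (App s u)"
| C5: "A \<alpha> (Abs s) \<Longrightarrow> C \<alpha> u \<Longrightarrow> C \<alpha> (App (Abs s) u)"

inductive H :: "trm \<Rightarrow> bool" where
  H1: "H (BVar i)" | H2: "H (FVar a)" | H3: "H s \<Longrightarrow> H (App s u)"

inductive P :: "var \<Rightarrow> trm \<Rightarrow> bool" for a where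
  P1: "P a (FVar a)" | P2: "P a s \<Longrightarrow> P a (Abs s)" | P3: "P a s \<Longrightarrow> P a (App s u)"
| P4: "H s \<Longrightarrow> P a u \<Longrightarrow> P a (App s u)"

inductive_simps A_FVar[simp]: "A \<alpha> (FVar y)"
inductive_simps A_BVar[simp]: "A \<alpha> (BVar i)"
inductive_simps A_Abs[simp]: "A \<alpha> (Abs s)"
inductive_simps A_App[simp]: "A \<alpha> (App s u)"
inductive_simps C_Abs[simp]: "C \<alpha> (Abs s)"
inductive_simps C_App: "C \<alpha> (App s u)"

inductive_simps P_FVar[simp]: "P a (FVar y)"
inductive_simps P_BVar[simp]: "P a (BVar i)"
inductive_simps P_Abs[simp]: "P a (Abs s)"
inductive_simps P_App: "P a (App s u)"

lemma A_opn: "A \<alpha> w \<Longrightarrow> opn k u w = w"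
  by (induction arbitrary: k rule: A.induct) auto

lemma A_fv: "A \<alpha> w \<Longrightarrow> fv w = {\<alpha>}"
  by (induction rule: A.induct) auto

lemma A_C: "A \<alpha> w \<Longrightarrow> C \<alpha> w"
  by (induction rule: A.induct) (auto intro: C.intros)

lemma A_P: "A \<alpha> w \<Longrightarrow> P \<alpha> w"
  by (induction rule: A.induct) (auto intro: P.intros)

lemma A_nobeta: "beta1 w w' \<Longrightarrow> A \<alpha> w \<Longrightarrow> False"
proof (induction rule: beta1.induct)
  case (beta_abs L s s')
  then have "A \<alpha> s" by simp
  obtain x where "x \<notin> L" using beta_abs(1) ex_new_if_finite infinite_UNIV_nat by blast
  with beta_abs(3) \<open>A \<alpha> s\<close> show False by (simp add: A_opn)
qed auto

lemma notAbs_opn: "\<not> isAbs s \<Longrightarrow> \<not> isAbs (opn k (FVar x) s)"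
  by (cases s) auto

lemma isAbs_opn: "isAbs s \<Longrightarrow> isAbs (opn k u s)"
  by (cases s) auto

lemma C_opn: "C \<alpha> w \<Longrightarrow> C \<alpha> (opn k (FVar x) w)"
proof (induction arbitrary: k rule: C.induct)
  case (C5 s u)
  then show ?case using A_opn[OF C5(1)] by (metis C.C5 opn.simps(3))
qed (auto intro: C.intros simp: notAbs_opn)

lemma A_opn_rev: "A \<alpha> (opn k (FVar x) w) \<Longrightarrow> x \<noteq> \<alpha> \<Longrightarrow> A \<alpha> w"
proof (induction w arbitrary: k)
  case (FVar y) then show ?case by simp
next
  case (BVar i) then show ?case by (cases "i = k") auto
next
  case (App s u) then show ?case by auto
next
  case (Abs s) then show ?case by auto
qed

lemma C_opn_rev: "C \<alpha> (opn k (FVar x) w) \<Longrightarrow> x \<noteq> \<alpha> \<Longrightarrow> C \<alpha> w"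
proof (induction w arbitrary: k)
  case (FVar y) then show ?case by (auto intro: C.intros)
next
  case (BVar i) then show ?case by (auto intro: C.intros)
next
  case (App s u)
  from App.prems(1) have "C \<alpha> (App (opn k (FVar x) s) (opn k (FVar x) u))" by simp
  then show ?case
  proof (cases rule: C.cases)
    case C4
    then show ?thesis using App by (auto intro!: C.C4 dest: isAbs_opn)
  next
    case (C5 r)
    then obtain r0 where s: "s = Abs r0" by (cases s) (auto split: if_splits)
    with C5 have "A \<alpha> (opn k (FVar x) (Abs r0))" by simp
    then have "A \<alpha> (Abs r0)" using A_opn_rev App.prems(2) by blast
    with C5 App show ?thesis unfolding s by (auto intro!: C.C5)
  qed
next
  case (Abs s) then show ?case by auto
qed

lemma isAbs_ex: "isAbs s \<Longrightarrow> \<exists>r. s = Abs r" by (cases s) auto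

lemma C_beta: "beta1 w w' \<Longrightarrow> C \<alpha> w \<Longrightarrow> C \<alpha> w' \<and> (\<not> isAbs w \<longrightarrow> isAbs w' \<longrightarrow> A \<alpha> w')"
proof (induction rule: beta1.induct)
  case (beta_redex s u)
  from beta_redex.prems have "A \<alpha> (Abs s)" by (auto simp: C_App)
  then have "A \<alpha> s" by simp
  then show ?case by (simp add: A_opn A_C)
next
  case (beta_app1 s s' u)
  from beta_app1.prems show ?case
  proof (cases rule: C.cases)
    case C4
    with beta_app1.IH have IH: "C \<alpha> s'" "isAbs s' \<longrightarrow> A \<alpha> s'" by auto
    show ?thesis
    proof (cases "isAbs s'")
      case True
      then obtain r where "s' = Abs r" using isAbs_ex by blast
      with IH C4 show ?thesis by (auto intro: C.C5)
    next
      case False with IH C4 show ?thesis by (auto intro: C.C4)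
    qed
  next
    case (C5 r)
    with beta_app1.hyps A_nobeta show ?thesis by blast
  qed
next
  case (beta_app2 s u u')
  from beta_app2.prems show ?case
    by (cases rule: C.cases) (use beta_app2.IH in \<open>auto intro: C.C4 C.C5\<close>)
next
  case (beta_abs L s s')
  from beta_abs.prems have Cs: "C \<alpha> s" by (auto simp: C_App)
  obtain x where x: "x \<notin> L \<union> {\<alpha>}" using beta_abs(1) ex_new_if_finite infinite_UNIV_nat
    by (metis finite_Un finite.emptyI finite_insert)
  then have "C \<alpha> (opn 0 (FVar x) s')" using beta_abs(3) C_opn[OF Cs] by auto
  then have "C \<alpha> s'" using C_opn_rev x by blast
  then show ?case by (auto intro: C.C3)
qed

inductive_simps H_FVar[simp]: "H (FVar y)"
inductive_simps H_BVar[simp]: "H (BVar i)"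
inductive_simps H_Abs[simp]: "H (Abs s)"
inductive_simps H_App[simp]: "H (App s u)"

lemma H_beta: "beta1 s s' \<Longrightarrow> H s \<Longrightarrow> H s'"
  by (induction rule: beta1.induct) auto

lemma H_notAbs: "H s \<Longrightarrow> \<not> isAbs s"
  by (cases s) auto

lemma H_opn: "H s \<Longrightarrow> H (opn k (FVar x) s)"
  by (induction s) auto

lemma H_opn_rev: "H (opn k (FVar x) s) \<Longrightarrow> H s"
  by (induction s) auto

lemma P_opn: "P a w \<Longrightarrow> P a (opn k (FVar x) w)"
proof (induction arbitrary: k rule: P.induct)
  case (P4 s u) then show ?case by (simp add: P_App H_opn)
qed (auto simp: P_App)

lemma P_opn_rev: "P a (opn k (FVar x) w) \<Longrightarrow> x \<noteq> a \<Longrightarrow> P a w"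
proof (induction w arbitrary: k)
  case (FVar y) then show ?case by simp
next
  case (BVar i) then show ?case by (cases "i = k") auto
next
  case (App s u) then show ?case by (auto simp: P_App dest: H_opn_rev)
next
  case (Abs s) then show ?case by auto
qed

lemma P_beta: "beta1 w w' \<Longrightarrow> C \<alpha> w \<Longrightarrow> P a w \<Longrightarrow> P a w'"
proof (induction rule: beta1.induct)
  case (beta_redex s u)
  from beta_redex.prems(1) have "A \<alpha> (Abs s)" by (auto simp: C_App)
  then have "A \<alpha> s" by simp
  moreover from beta_redex.prems(2) have "P a s"
    by (auto simp: P_App)
  ultimately show ?case by (simp add: A_opn)
next
  case (beta_app1 s s' u)
  from beta_app1.prems(2) show ?case
  proof (cases rule: P.cases)
    case P3
    from beta_app1.prems(1) show ?thesis
    proof (cases rule: C.cases)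
      case C4 with P3 beta_app1.IH show ?thesis by (auto intro: P.P3)
    next
      case (C5 r) with beta_app1.hyps A_nobeta show ?thesis by blast
    qed
  next
    case P4 with beta_app1.hyps H_beta show ?thesis by (auto intro: P.P4)
  qed
next
  case (beta_app2 s u u')
  from beta_app2.prems(1) have Cu: "C \<alpha> u" by (auto simp: C_App)
  from beta_app2.prems(2) show ?case
    by (cases rule: P.cases) (use beta_app2.IH Cu in \<open>auto intro: P.P3 P.P4\<close>)
next
  case (beta_abs L s s')
  from beta_abs.prems have Cs: "C \<alpha> s" and Ps: "P a s" by auto
  obtain x where x: "x \<notin> L \<union> {a}" using beta_abs(1) ex_new_if_finite infinite_UNIV_nat
    by (metis finite_Un finite.emptyI finite_insert)
  then have "P a (opn 0 (FVar x) s')" using beta_abs(3) C_opn[OF Cs] P_opn[OF Ps] by auto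
  then have "P a s'" using P_opn_rev x by blast
  then show ?case by (auto intro: P.P2)
qed

lemma P_fv: "P a w \<Longrightarrow> a \<in> fv w"
  by (induction rule: P.induct) auto

lemma cls_fresh: "y \<notin> fv w \<Longrightarrow> cls k y w = w"
  by (induction w arbitrary: k) auto

lemma A_lams: "\<alpha> \<notin> set ys \<Longrightarrow> A \<alpha> (lams ys \<alpha>)"
proof (induction ys)
  case Nil then show ?case by (simp add: lams_def A.intros)
next
  case (Cons y ys)
  then have "A \<alpha> (lams ys \<alpha>)" by simp
  moreover have "lams (y # ys) \<alpha> = Abs (cls 0 y (lams ys \<alpha>))" by (simp add: lams_def lam_def)
  moreover have "y \<notin> fv (lams ys \<alpha>)" using A_fv[OF \<open>A \<alpha> (lams ys \<alpha>)\<close>] Cons.prems by auto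
  ultimately show ?case by (simp add: cls_fresh A.intros)
qed

lemma A_notAbs_FVar: "A \<alpha> v \<Longrightarrow> \<not> isAbs v \<Longrightarrow> v = FVar \<alpha>"
  by (cases rule: A.cases) auto

lemma subst_C:
  assumes \<Sigma>: "\<And>y u. \<sigma> y = Some u \<Longrightarrow> A \<alpha> u"
  shows "\<not> has_redex t \<Longrightarrow> C \<alpha> (msubst \<sigma> t)"
proof (induction t)
  case (FVar y) then show ?case
    by (cases "\<sigma> y") (auto intro: C.intros A_C \<Sigma>)
next
  case (BVar i) then show ?case by (auto intro: C.intros)
next
  case (Abs s) then show ?case by (auto intro: C.intros)
next
  case (App s u)
  then have IH: "C \<alpha> (msubst \<sigma> s)" "C \<alpha> (msubst \<sigma> u)" and ns: "\<not> isAbs s"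
    by (auto dest: isAbs_ex)
  show ?case
  proof (cases "isAbs (msubst \<sigma> s)")
    case False with IH show ?thesis by (auto intro: C.C4)
  next
    case True
    then obtain y v where "s = FVar y" "\<sigma> y = Some v"
      using ns by (cases s) (auto split: option.splits)
    with True obtain r where "msubst \<sigma> s = Abs r" "A \<alpha> (Abs r)"
      using \<Sigma> isAbs_ex by force
    with IH show ?thesis by (auto intro: C.C5)
  qed
qed

lemma subst_H: "\<not> has_redex s \<Longrightarrow> \<not> isAbs s \<Longrightarrow> H (msubst \<sigma> s) \<or> (\<exists>y\<in>fv s. \<sigma> y \<noteq> None)"
proof (induction s)
  case (FVar y) then show ?case by (cases "\<sigma> y") (auto intro: H.intros)
next
  case (App s u)
  then have "\<not> isAbs s" by (auto dest: isAbs_ex)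
  with App show ?case by (auto intro: H.intros)
qed (auto intro: H.intros)

lemma subst_P:
  assumes \<Sigma>: "\<And>y u. \<sigma> y = Some u \<Longrightarrow> A \<alpha> u"
  shows "\<not> has_redex t \<Longrightarrow> x \<in> fv t \<Longrightarrow> \<sigma> x \<noteq> None \<Longrightarrow> P \<alpha> (msubst \<sigma> t)"
proof (induction t arbitrary: x)
  case (FVar y) then show ?case by (auto split: option.splits intro: A_P[OF \<Sigma>])
next
  case (BVar i) then show ?case by simp
next
  case (Abs s) then show ?case by (auto intro: P.intros)
next
  case (App s u)
  then have ns: "\<not> isAbs s" and nrs: "\<not> has_redex s" and nru: "\<not> has_redex u"
    by (auto dest: isAbs_ex)
  show ?case
  proof (cases "x \<in> fv s")
    case True with App nrs show ?thesis by (auto intro: P.P3)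
  next
    case False
    then have "x \<in> fv u" using App by simp
    with App.IH(2)[OF nru _ App.prems(3)] have Pu: "P \<alpha> (msubst \<sigma> u)" by simp
    from subst_H[OF nrs ns, of \<sigma>] show ?thesis
    proof
      assume "H (msubst \<sigma> s)" with Pu show ?thesis by (auto intro: P.P4)
    next
      assume "\<exists>y\<in>fv s. \<sigma> y \<noteq> None"
      with App.IH(1) nrs show ?thesis by (auto intro: P.P3)
    qed
  qed
qed

theorem lemma2p1p4:
  fixes t v :: trm and \<alpha> :: var and xs :: "var list" and yss :: "var list list"
  assumes "lc t" and "normal t"
    and "lc v" and "closed v"
    and "distinct xs" and "length yss = length xs"
    and "\<forall>ys \<in> set yss. \<alpha> \<notin> set ys"
    and "beta (msubst (map_of (zip xs (map (\<lambda>ys. lams ys \<alpha>) yss))) t) v"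
  shows "\<forall>x \<in> set xs. x \<notin> fv t"
proof (intro ballI notI)
  fix x assume xin: "x \<in> set xs" and xfv: "x \<in> fv t"
  define \<sigma> where "\<sigma> = map_of (zip xs (map (\<lambda>ys. lams ys \<alpha>) yss))"
  have \<Sigma>: "A \<alpha> u" if "\<sigma> y = Some u" for y u
  proof -
    from that have "u \<in> set (map (\<lambda>ys. lams ys \<alpha>) yss)"
      unfolding \<sigma>_def by (metis map_of_SomeD set_zip_rightD)
    then show ?thesis using assms(7) A_lams by auto
  qed
  have "\<sigma> x \<noteq> None" unfolding \<sigma>_def using xin assms(6)
    by (simp add: map_of_zip_is_None)
  have nr: "\<not> has_redex t" using assms(2) normal_def by simp
  have C0: "C \<alpha> (msubst \<sigma> t)" using subst_C[where \<sigma>=\<sigma> and \<alpha>=\<alpha> and t=t] \<Sigma> nr by blast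
  have P0: "P \<alpha> (msubst \<sigma> t)" using subst_P[where \<sigma>=\<sigma> and \<alpha>=\<alpha> and t=t and x=x] \<Sigma> nr xfv \<open>\<sigma> x \<noteq> None\<close> by blast
  have "beta (msubst \<sigma> t) v" using assms(8) \<sigma>_def by simp
  then have "C \<alpha> v \<and> P \<alpha> v"
  proof (induction rule: rtranclp_induct)
    case base then show ?case using C0 P0 by simp
  next
    case (step w w') then show ?case using C_beta P_beta by blast
  qed
  then have "\<alpha> \<in> fv v" using P_fv by blast
  with assms(4) show False by (simp add: closed_def)
qed

end
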